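(* Let $\mathcal Q=\{I_j\}_{j\in\mathbb Z}$ be a bounded geometry partition of $\mathbb R$ (identified with $\partial\mathbb H_r$ via $iy\mapsto y$) with constant $C$, normalized so that $I_0=(-1,1)$, and let $1<M<\infty$. Then there is a bounded geometry partition $\mathcal Q'=\{I'_j\}_{j\in\mathbb Z}$ of $\mathbb R$ such that: (1) $I'_0=I_0$; (2) $I'_{-j}=-I'_j$ for all $j$; (3) $|I'_j|$ is a non-increasing function of $|j|$; (4) every $|I'_j|$ is an integer power of $2$; (5) if $I'\in\mathcal Q'\setminus\{I_0\}$ intersects $I\in\mathcal Q$ then $|I'|<|I|/M$; (6) the bounded geometry constant of $\mathcal Q'$ is bounded above by a constant depending only on $M$ and $C$.
   Context: A partition of a line is a locally finite collection of disjoint open intervals whose closures cover the line. It has bounded geometry with constant $C$ if $|I|/|J|\le C$ for every pair of adjacent intervals (sharing an endpoint). *)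

theory Defs
  imports "HOL-Analysis.Analysis"
begin

definition ilen :: "real set \<Rightarrow> real" where
  "ilen I = measure lborel I"

definition is_partition :: "real set set \<Rightarrow> bool" where
  "is_partition P \<longleftrightarrow>
     (\<forall>I\<in>P. is_interval I \<and> open I \<and> I \<noteq> {}) \<and>
     (\<forall>I\<in>P. \<forall>J\<in>P. I \<noteq> J \<longrightarrow> I \<inter> J = {}) \<and>
     (\<forall>x::real. \<exists>U. open U \<and> x \<in> U \<and> finite {I\<in>P. I \<inter> U \<noteq> {}}) \<and>
     \<Union>(closure ` P) = UNIV"

definition adjacent :: "real set \<Rightarrow> real set \<Rightarrow> bool" where
  "adjacent I J \<longleftrightarrow> I \<noteq> J \<and> closure I \<inter> closure J \<noteq> {}"

definition bounded_geometry :: "real set set \<Rightarrow> real \<Rightarrow> bool" where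
  "bounded_geometry P C \<longleftrightarrow>
     (\<forall>I\<in>P. bounded I) \<and>
     (\<forall>I\<in>P. \<forall>J\<in>P. adjacent I J \<longrightarrow> ilen I / ilen J \<le> C)"

definition Z_partition :: "(int \<Rightarrow> real set) \<Rightarrow> bool" where
  "Z_partition I \<longleftrightarrow> is_partition (range I) \<and> inj I \<and>
     (\<forall>j. (\<forall>x\<in>I j. \<forall>y\<in>I (j+1). x < y) \<and> adjacent (I j) (I (j+1)))"

end

theory Submission
  imports Defs
begin


lemma strict_mono_int_suc:
  fixes f :: "int \<Rightarrow> real"
  assumes "\<And>k. f k < f (k+1)"
  shows "strict_mono f"
proof (rule strict_monoI)
  fix j k :: int assume "j < k"
  then show "f j < f k"
  proof (induct k rule: int_gr_induct)
    case base then show ?case using assms by simp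
  next
    case (step i) then show ?case using assms[of i] by linarith
  qed
qed

lemma locate:
  fixes e :: "int \<Rightarrow> real"
  assumes sm: "strict_mono e" and up: "\<And>B. \<exists>k. B < e k" and dn: "\<And>B. \<exists>k. e k < B"
  shows "\<exists>p. e p \<le> x \<and> x < e (p+1)"
proof -
  obtain K1 where K1: "x < e K1" using up by blast
  obtain K0 where K0: "e K0 < x" using dn by blast
  define S where "S = {k. K0 \<le> k \<and> e k \<le> x}"
  have sub: "S \<subseteq> {K0..K1}"
  proof
    fix k assume "k \<in> S"
    then have "e k \<le> x" by (simp add: S_def)
    have "\<not> K1 \<le> k"
    proof
      assume "K1 \<le> k" then have "e K1 \<le> e k" using sm by (simp add: strict_mono_less_eq)
      then show False using K1 `e k \<le> x` by linarith
    qed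
    moreover have "K0 \<le> k" using `k \<in> S` by (simp add: S_def)
    ultimately show "k \<in> {K0..K1}" by simp
  qed
  have fin: "finite S" using sub finite_subset by blast
  have ne: "K0 \<in> S" using K0 by (simp add: S_def)
  define p where "p = Max S"
  have "p \<in> S" unfolding p_def using fin ne by (intro Max_in) auto
  moreover have "p + 1 \<notin> S" using fin Max_ge[OF fin, of "p+1"] p_def by force
  ultimately show ?thesis by (auto simp: S_def not_le not_less)
qed

lemma locate2:
  fixes e :: "int \<Rightarrow> real"
  assumes sm: "strict_mono e" and up: "\<And>B. \<exists>k. B < e k" and dn: "\<And>B. \<exists>k. e k < B"
  shows "\<exists>p. e p < x \<and> x \<le> e (p+1)"
proof -
  obtain K1 where K1: "x < e K1" using up by blast
  obtain K0 where K0: "e K0 < x" using dn by blast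
  define S where "S = {k. K0 \<le> k \<and> e k < x}"
  have sub: "S \<subseteq> {K0..K1}"
  proof
    fix k assume "k \<in> S"
    then have "e k < x" by (simp add: S_def)
    have "\<not> K1 \<le> k"
    proof
      assume "K1 \<le> k" then have "e K1 \<le> e k" using sm by (simp add: strict_mono_less_eq)
      then show False using K1 `e k < x` by linarith
    qed
    moreover have "K0 \<le> k" using `k \<in> S` by (simp add: S_def)
    ultimately show "k \<in> {K0..K1}" by simp
  qed
  have fin: "finite S" using sub finite_subset by blast
  have ne: "K0 \<in> S" using K0 by (simp add: S_def)
  define p where "p = Max S"
  have "p \<in> S" unfolding p_def using fin ne by (intro Max_in) auto
  moreover have "p + 1 \<notin> S" using fin Max_ge[OF fin, of "p+1"] p_def by force
  ultimately show ?thesis by (auto simp: S_def not_le not_less)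
qed

lemma compose_Z:
  fixes e :: "int \<Rightarrow> real"
  assumes sm: "strict_mono e" and up: "\<And>B. \<exists>k. B < e k" and dn: "\<And>B. \<exists>k. e k < B"
  shows "Z_partition (\<lambda>k. {e k<..<e (k+1)})"
proof -
  let ?I = "\<lambda>k. {e k<..<e (k+1)}"
  have lt: "e k < e (k+1)" for k using sm by (simp add: strict_mono_less)
  have ord: "j < k \<Longrightarrow> e (j+1) \<le> e k" for j k
  proof -
    assume "j < k" then have "j + 1 \<le> k" by simp
    then show ?thesis using sm by (simp add: strict_mono_less_eq)
  qed
  have disj: "?I j \<inter> ?I k = {}" if "j \<noteq> k" for j k
  proof (cases "j < k")
    case True then have "e (j+1) \<le> e k" by (rule ord)
    then show ?thesis by auto
  next
    case False then have "k < j" using that by linarith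
    then have "e (k+1) \<le> e j" by (rule ord)
    then show ?thesis by auto
  qed
  have ne: "?I k \<noteq> {}" for k using lt[of k] by simp
  have inj: "inj ?I"
  proof (rule injI)
    fix j k assume eq: "?I j = ?I k"
    show "j = k"
    proof (rule ccontr)
      assume "j \<noteq> k"
      then have "?I j \<inter> ?I k = {}" by (rule disj)
      then show False using eq ne[of j] by simp
    qed
  qed
  have part: "is_partition (range ?I)"
    unfolding is_partition_def
  proof (intro conjI)
    show "\<forall>I\<in>range ?I. is_interval I \<and> open I \<and> I \<noteq> {}"
    proof
      fix I assume "I \<in> range ?I"
      then obtain k where "I = ?I k" by blast
      then show "is_interval I \<and> open I \<and> I \<noteq> {}" using ne[of k] is_interval_oo by simp
    qed
    show "\<forall>I\<in>range ?I. \<forall>J\<in>range ?I. I \<noteq> J \<longrightarrow> I \<inter> J = {}"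
    proof (intro ballI impI)
      fix I J assume "I \<in> range ?I" "J \<in> range ?I" "I \<noteq> J"
      then obtain j k where jk: "I = ?I j" "J = ?I k" by blast
      then have "j \<noteq> k" using `I \<noteq> J` by blast
      then show "I \<inter> J = {}" using disj jk by simp
    qed
    show "\<forall>x. \<exists>U. open U \<and> x \<in> U \<and> finite {I\<in>range ?I. I \<inter> U \<noteq> {}}"
    proof
      fix x :: real
      obtain K1 where K1: "x + 1 < e K1" using up by blast
      obtain K0 where K0: "e K0 < x - 1" using dn by blast
      have "{I\<in>range ?I. I \<inter> {x-1<..<x+1} \<noteq> {}} \<subseteq> ?I ` {K0..K1}"
      proof
        fix I assume I: "I \<in> {I\<in>range ?I. I \<inter> {x-1<..<x+1} \<noteq> {}}"
        then obtain k where k: "I = ?I k" by blast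
        obtain y where "y \<in> I \<inter> {x-1<..<x+1}" using I by blast
        then have y: "e k < y" "y < e (k+1)" "x - 1 < y" "y < x+1" using k by auto
        have "\<not> K1 \<le> k"
        proof
          assume "K1 \<le> k" then have "e K1 \<le> e k" using sm by (simp add: strict_mono_less_eq)
          then show False using y K1 by linarith
        qed
        moreover have "\<not> k + 1 \<le> K0"
        proof
          assume "k + 1 \<le> K0" then have "e (k+1) \<le> e K0" using sm by (simp add: strict_mono_less_eq)
          then show False using y K0 by linarith
        qed
        ultimately show "I \<in> ?I ` {K0..K1}" using k by auto
      qed
      then have "finite {I\<in>range ?I. I \<inter> {x-1<..<x+1} \<noteq> {}}"
        by (rule finite_subset) simp
      then show "\<exists>U. open U \<and> x \<in> U \<and> finite {I\<in>range ?I. I \<inter> U \<noteq> {}}"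
        by (intro exI[of _ "{x-1<..<x+1}"]) simp
    qed
    show "\<Union>(closure ` range ?I) = UNIV"
    proof (rule set_eqI, rule iffI)
      fix x :: real
      obtain p where "e p \<le> x" "x < e (p+1)" using locate[OF sm up dn] by blast
      then have "x \<in> closure (?I p)" using lt[of p] by simp
      then show "x \<in> \<Union>(closure ` range ?I)" by blast
    qed simp
  qed
  show ?thesis unfolding Z_partition_def
  proof (intro conjI allI ballI part inj)
    fix j x y assume "x \<in> ?I j" "y \<in> ?I (j+1)" then show "x < y" by auto
  next
    fix j
    have "?I j \<noteq> ?I (j+1)"
    proof
      assume "?I j = ?I (j+1)"
      with inj have "j = j+1" by (rule injD)
      then show False by simp
    qed
    moreover have "e (j+1) \<in> closure (?I j) \<inter> closure (?I (j+1))" using lt[of j] lt[of "j+1"] by simp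
    ultimately show "adjacent (?I j) (?I (j+1))" unfolding adjacent_def by blast
  qed
qed



lemma ioo_form:
  fixes S :: "real set"
  assumes iv: "is_interval S" and op: "open S" and ne: "S \<noteq> {}" and bd: "bounded S"
  shows "S = {Inf S<..<Sup S}"
proof -
  have ba: "bdd_above S" using bd by (rule bounded_imp_bdd_above)
  have bb: "bdd_below S" using bd by (rule bounded_imp_bdd_below)
  show ?thesis
  proof (rule set_eqI, rule iffI)
    fix x assume x: "x \<in> S"
    obtain eps where eps: "eps > 0" "ball x eps \<subseteq> S" using op x open_contains_ball by blast
    have "x + eps/2 \<in> S" using eps by (intro subsetD[OF eps(2)]) (simp add: dist_real_def)
    then have "x + eps/2 \<le> Sup S" using ba by (rule cSup_upper)
    moreover have "x - eps/2 \<in> S" using eps by (intro subsetD[OF eps(2)]) (simp add: dist_real_def)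
    then have "Inf S \<le> x - eps/2" using bb by (rule cInf_lower)
    ultimately show "x \<in> {Inf S<..<Sup S}" using eps by simp
  next
    fix x assume x: "x \<in> {Inf S<..<Sup S}"
    then have "Inf S < x" "x < Sup S" by auto
    then obtain a b where "a \<in> S" "a < x" "b \<in> S" "x < b"
      using cInf_less_iff[OF ne bb] less_cSup_iff[OF ne ba] by blast
    then show "x \<in> S" using iv unfolding is_interval_1 by (meson less_imp_le)
  qed
qed

lemma decompose_Z:
  assumes Z: "Z_partition I" and bd: "\<forall>J\<in>range I. bounded J"
  shows "\<exists>e. strict_mono e \<and> (\<forall>k. I k = {e k<..<e (k+1)}) \<and> (\<forall>B. \<exists>k. B < e k) \<and> (\<forall>B. \<exists>k. e k < B)"
proof -
  have P: "is_partition (range I)" and ordr: "\<And>j. \<forall>x\<in>I j. \<forall>y\<in>I (j+1). x < y"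
    and adj: "\<And>j. adjacent (I j) (I (j+1))"
    using Z unfolding Z_partition_def by auto
  define c where "c k = Inf (I k)" for k
  define d where "d k = Sup (I k)" for k
  have form: "I k = {c k<..<d k}" for k
    unfolding c_def d_def
    by (rule ioo_form) (use P bd in \<open>auto simp: is_partition_def\<close>)
  have ne: "I k \<noteq> {}" for k using P by (auto simp: is_partition_def)
  have cd: "c k < d k" for k using ne[of k] form[of k] by (metis greaterThanLessThan_empty_iff not_le)
  have le1: "d k \<le> c (k+1)" for k
  proof (rule ccontr)
    assume "\<not> d k \<le> c (k+1)"
    then have h: "c (k+1) < d k" by simp
    define x where "x = max ((c k + d k)/2) ((c (k+1) + d k)/2)"
    define y where "y = (c (k+1) + min x (d (k+1)))/2"
    have "x \<in> I k" unfolding form x_def using h cd[of k] by (auto simp: max_def min_def)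
    moreover have "y \<in> I (k+1)" unfolding form y_def x_def using h cd[of k] cd[of "k+1"] by (auto simp: max_def min_def)
    moreover have "y < x"
    proof -
      have cx: "c (k+1) < x" unfolding x_def using h by (auto simp: max_def)
      show ?thesis unfolding y_def using cx by (auto simp: min_def)
    qed
    ultimately show False using ordr[of k] by fastforce
  qed
  have le2: "c (k+1) \<le> d k" for k
  proof -
    have "closure (I k) \<inter> closure (I (k+1)) \<noteq> {}" using adj[of k] by (simp add: adjacent_def)
    then obtain x where "x \<in> closure (I k)" "x \<in> closure (I (k+1))" by blast
    then have "x \<le> d k" "c (k+1) \<le> x" using form cd by auto
    then show ?thesis by linarith
  qed
  have eq: "d k = c (k+1)" for k using le1[of k] le2[of k] by linarith
  have form2: "I k = {c k<..<c (k+1)}" for k using form[of k] eq[of k] by simp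
  have sm: "strict_mono c" by (rule strict_mono_int_suc) (use cd eq in \<open>metis\<close>)
  have cov: "\<exists>k. c k \<le> x \<and> x \<le> c (k+1)" for x
  proof -
    have "x \<in> \<Union>(closure ` range I)" using P by (simp add: is_partition_def)
    then obtain k where "x \<in> closure (I k)" by blast
    then show ?thesis using form2[of k] cd[of k] eq[of k] by auto
  qed
  have up: "\<exists>k. B < c k" for B
  proof -
    obtain k where "c k \<le> B + 1" "B + 1 \<le> c (k+1)" using cov by blast
    then show ?thesis by (intro exI[of _ "k+1"]) simp
  qed
  have dn: "\<exists>k. c k < B" for B
  proof -
    obtain k where "c k \<le> B - 1" "B - 1 \<le> c (k+1)" using cov by blast
    then show ?thesis by (intro exI[of _ "k"]) simp
  qed
  show ?thesis using sm form2 up dn by blast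
qed



definition good :: "(int \<Rightarrow> real) \<Rightarrow> real \<Rightarrow> real \<Rightarrow> real \<Rightarrow> bool" where
  "good e M t l \<longleftrightarrow> (\<forall>k. e k < t \<and> -t < e (k+1) \<longrightarrow> M*l < e (k+1) - e k)"

lemma good_mono:
  assumes "good e M t l" "t' \<le> t" "l' \<le> l" "0 < M"
  shows "good e M t' l'"
  unfolding good_def
proof (intro allI impI)
  fix k assume "e k < t' \<and> - t' < e (k + 1)"
  then have "e k < t \<and> - t < e (k + 1)" using assms by linarith
  then have "M*l < e (k+1) - e k" using assms(1) by (simp add: good_def)
  moreover have "M*l' \<le> M*l" using assms by simp
  ultimately show "M * l' < e (k + 1) - e k" by linarith
qed

lemma good_exists:
  fixes e :: "int \<Rightarrow> real"
  assumes sm: "strict_mono e" and up: "\<And>B. \<exists>k. B < e k" and dn: "\<And>B. \<exists>k. e k < B"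
    and M: "0 < M"
  shows "\<exists>l>0. good e M t l"
proof -
  obtain K1 where K1: "\<bar>t\<bar> < e K1" using up by blast
  obtain K0 where K0: "e K0 < -\<bar>t\<bar>" using dn by blast
  have t_nonneg: "0 \<le> \<bar>t\<bar>" by simp
  define F where "F = (\<lambda>k. e (k+1) - e k) ` {K0..K1}"
  have finF: "finite F" unfolding F_def by simp
  have "e K0 < e K1" using K0 K1 t_nonneg by linarith
  then have "K0 < K1" using sm by (simp add: strict_mono_less)
  then have neF: "F \<noteq> {}" unfolding F_def by simp
  have posF: "\<forall>x\<in>F. 0 < x" unfolding F_def using sm by (auto simp: strict_mono_less)
  define m where "m = Min F"
  have mpos: "0 < m" unfolding m_def using finF neF posF by simp
  define l where "l = m / (2*M)"
  have lpos: "0 < l" unfolding l_def using mpos M by simp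
  have Ml: "M * l = m / 2" unfolding l_def using M by simp
  have "good e M t l" unfolding good_def
  proof (intro allI impI)
    fix k assume k: "e k < t \<and> - t < e (k + 1)"
    have "\<not> K1 \<le> k"
    proof
      assume "K1 \<le> k" then have "e K1 \<le> e k" using sm by (simp add: strict_mono_less_eq)
      then show False using k K1 by linarith
    qed
    moreover have "\<not> k + 1 \<le> K0"
    proof
      assume "k + 1 \<le> K0" then have "e (k+1) \<le> e K0" using sm by (simp add: strict_mono_less_eq)
      then show False using k K0 by linarith
    qed
    ultimately have "e (k+1) - e k \<in> F" unfolding F_def by auto
    then have "m \<le> e (k+1) - e k" unfolding m_def using finF by simp
    then show "M * l < e (k + 1) - e k" using Ml mpos by linarith
  qed
  then show ?thesis using lpos by blast
qed

lemma good_step: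
  fixes e :: "int \<Rightarrow> real"
  assumes sm: "strict_mono e" and up: "\<And>B. \<exists>k. B < e k" and dn: "\<And>B. \<exists>k. e k < B"
    and R1: "\<And>k. e (k+1) - e k \<le> C * (e (k+1+1) - e (k+1))"
    and R2: "\<And>k. e (k+1+1) - e (k+1) \<le> C * (e (k+1) - e k)"
    and M: "1 \<le> M" and C: "1 \<le> C" and t: "0 < t" and g: "good e M t l"
    and l': "0 < l'" "l' * C \<le> l"
  shows "good e M (t + l') l'"
  unfolding good_def
proof (intro allI impI)
  fix k assume k: "e k < t + l' \<and> - (t + l') < e (k + 1)"
  have "l' * 1 \<le> l' * C" using C l' by (intro mult_left_mono) auto
  then have ll: "l' \<le> l" using l' by linarith
  show "M * l' < e (k + 1) - e k"
  proof (cases "e k < t \<and> - t < e (k + 1)")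
    case True
    then have "M*l < e (k+1) - e k" using g by (simp add: good_def)
    moreover have "M*l' \<le> M*l" using ll M by simp
    ultimately show ?thesis by linarith
  next
    case False
    then have "t \<le> e k \<or> e (k+1) \<le> -t" by linarith
    then show ?thesis
    proof
      assume ek: "t \<le> e k"
      obtain p where p: "e p < t" "t \<le> e (p+1)" using locate2[OF sm up dn] by blast
      have "M*l < e (p+1) - e p" using g p t by (simp add: good_def)
      moreover have "e (p+1) - e p \<le> C * (e (p+1+1) - e (p+1))" by (rule R1)
      moreover have "M * (l' * C) \<le> M * l" using l' M by simp
      ultimately have "C * (M * l') < C * (e (p+1+1) - e (p+1))" by (simp add: algebra_simps)
      then have big: "M * l' < e (p+1+1) - e (p+1)" using C by simp
      have "l' \<le> M * l'" using M l' by simp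
      then have "t + l' < e (p+1+1)" using big p by linarith
      then have "e k < e (p+1+1)" using k by linarith
      then have "k < p + 1 + 1" using sm by (simp add: strict_mono_less)
      moreover have "e p < e k" using p ek by linarith
      then have "p < k" using sm by (simp add: strict_mono_less)
      ultimately have "k = p + 1" by linarith
      then show ?thesis using big by simp
    next
      assume ek: "e (k+1) \<le> -t"
      obtain p where p: "e p \<le> -t" "-t < e (p+1)" using locate[OF sm up dn] by blast
      have "M*l < e (p+1) - e p" using g p t by (simp add: good_def)
      moreover have "e (p-1+1+1) - e (p-1+1) \<le> C * (e (p-1+1) - e (p-1))" by (rule R2)
      then have "e (p+1) - e p \<le> C * (e p - e (p-1))" by simp
      moreover have "M * (l' * C) \<le> M * l" using l' M by simp
      ultimately have "C * (M * l') < C * (e p - e (p-1))" by (simp add: algebra_simps)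
      then have big: "M * l' < e p - e (p-1)" using C by simp
      have "l' \<le> M * l'" using M l' by simp
      then have "e (p-1) < -t - l'" using big p by linarith
      then have "e (p-1) < e (k+1)" using k by linarith
      then have "p - 1 < k + 1" using sm by (simp add: strict_mono_less)
      moreover have "e (k+1) < e (p+1)" using p ek by linarith
      then have "k + 1 < p + 1" using sm by (simp add: strict_mono_less)
      ultimately have "k = p - 1" by linarith
      then show ?thesis using big by simp
    qed
  qed
qed

lemma good_init:
  fixes e :: "int \<Rightarrow> real"
  assumes sm: "strict_mono e" and e0: "e 0 = -1" and e1: "e 1 = 1" and M: "0 < M"
  shows "good e M 1 (1/M)"
  unfolding good_def
proof (intro allI impI)
  fix k assume k: "e k < 1 \<and> - 1 < e (k + 1)"
  then have "e k < e 1" using e1 by simp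
  then have "k < 1" using sm by (simp add: strict_mono_less)
  moreover have "e 0 < e (k+1)" using k e0 by simp
  then have "0 < k + 1" using sm by (simp add: strict_mono_less)
  ultimately have "k = 0" by linarith
  then show "M * (1 / M) < e (k + 1) - e k" using e0 e1 M by simp
qed



definition sel :: "(int \<Rightarrow> real) \<Rightarrow> real \<Rightarrow> real \<times> real \<Rightarrow> nat" where
  "sel e M bl = (LEAST s. good e M (fst bl + snd bl / 2^s) (snd bl / 2^s))"

primrec sq :: "(int \<Rightarrow> real) \<Rightarrow> real \<Rightarrow> nat \<Rightarrow> real \<times> real" where
  "sq e M 0 = (1, 2)"
| "sq e M (Suc n) = (let bl = sq e M n; s = sel e M bl in (fst bl + snd bl / 2^s, snd bl / 2^s))"

lemma sq_Suc_fst: "fst (sq e M (Suc n)) = fst (sq e M n) + snd (sq e M n) / 2 ^ sel e M (sq e M n)"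
  by (simp add: Let_def)
lemma sq_Suc_snd: "snd (sq e M (Suc n)) = snd (sq e M n) / 2 ^ sel e M (sq e M n)"
  by (simp add: Let_def)
declare sq.simps(2)[simp del]

lemma sel_good:
  assumes "good e M (fst bl + snd bl / 2^s) (snd bl / 2^s)"
  shows "good e M (fst bl + snd bl / 2^(sel e M bl)) (snd bl / 2^(sel e M bl)) \<and> sel e M bl \<le> s"
proof -
  let ?P = "\<lambda>s. good e M (fst bl + snd bl / 2^s) (snd bl / 2^s)"
  have "?P s" using assms .
  then have "?P (Least ?P)" by (rule LeastI)
  moreover have "Least ?P \<le> s" using \<open>?P s\<close> by (rule Least_le)
  ultimately show ?thesis unfolding sel_def by blast
qed

definition pw :: "real \<Rightarrow> real" where
  "pw x = 2 ^ (LEAST s::nat. x \<le> 2^s)"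

lemma pw_ex: "\<exists>s::nat. x \<le> (2::real)^s"
  using real_arch_pow[of 2 x] by (auto intro: less_imp_le)

lemma pw_ge: "x \<le> pw x"
  unfolding pw_def by (rule LeastI_ex[OF pw_ex])

lemma pw_one: "1 \<le> pw x"
  unfolding pw_def by simp

locale cons =
  fixes e :: "int \<Rightarrow> real" and M C :: real
  assumes sm: "strict_mono e" and up: "\<And>B. \<exists>k. B < e k" and dn: "\<And>B. \<exists>k. e k < B"
    and R1: "\<And>k. e (k+1) - e k \<le> C * (e (k+1+1) - e (k+1))"
    and R2: "\<And>k. e (k+1+1) - e (k+1) \<le> C * (e (k+1) - e k)"
    and M: "1 < M" and C: "1 \<le> C" and e0: "e 0 = -1" and e1: "e 1 = 1"
begin

abbreviation "B n \<equiv> fst (sq e M n)"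
abbreviation "L n \<equiv> snd (sq e M n)"

definition w :: "nat \<Rightarrow> nat" where
  "w n = (if n = 0 then (LEAST s::nat. 2*M*C \<le> 2^s) else (LEAST s::nat. C \<le> 2^s))"

lemma B_Suc: "B (Suc n) = B n + L n / 2 ^ sel e M (sq e M n)"
  by (rule sq_Suc_fst)
lemma L_Suc: "L (Suc n) = L n / 2 ^ sel e M (sq e M n)"
  by (rule sq_Suc_snd)

lemma wit:
  assumes "L n > 0" "B n \<ge> 1" "0 < n \<longrightarrow> good e M (B n) (L n)"
  shows "good e M (B n + L n / 2^(w n)) (L n / 2^(w n))"
proof (cases "n = 0")
  case True
  have Mp: "0 < M" using M by simp
  have wv: "2*M*C \<le> 2^(w n)" unfolding w_def using True by (simp add: LeastI_ex[OF pw_ex])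
  have g: "good e M 1 (1/M)" by (rule good_init[OF sm e0 e1 Mp])
  have "good e M (1 + 2 / 2^(w n)) (2 / 2^(w n))"
  proof (rule good_step[OF sm up dn R1 R2 _ C _ g])
    show "1 \<le> M" using M by simp
    show "(0::real) < 1" by simp
    show "0 < 2 / (2::real) ^ w n" by simp
    have eq1: "2 / 2 ^ w n * C = (2*M*C) / (2^(w n) * M)" using Mp by (simp add: field_simps)
    have eq2: "1 / M = 2^(w n) / (2^(w n) * M)" using Mp by simp
    have "(2*M*C) / (2^(w n) * M) \<le> 2^(w n) / (2^(w n) * M)"
      using wv Mp by (intro divide_right_mono) auto
    then show "2 / 2 ^ w n * C \<le> 1 / M" using eq1 eq2 by linarith
  qed
  then show ?thesis using True by simp
next
  case False
  have wv: "C \<le> 2^(w n)" unfolding w_def using False by (simp add: LeastI_ex[OF pw_ex])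
  show ?thesis
  proof (rule good_step[OF sm up dn R1 R2 _ C])
    show "1 \<le> M" using M by simp
    show "0 < B n" using assms by simp
    show "good e M (B n) (L n)" using assms False by simp
    show "0 < L n / 2 ^ w n" using assms by simp
    have "L n / 2 ^ w n * C = L n * (C / 2 ^ w n)" by simp
    also have "\<dots> \<le> L n * 1"
    proof (rule mult_left_mono)
      show "C / 2 ^ w n \<le> 1" using wv by (simp add: divide_le_eq_1)
      show "0 \<le> L n" using assms by simp
    qed
    finally show "L n / 2 ^ w n * C \<le> L n" by simp
  qed
qed

lemma inv: "L n > 0 \<and> B n \<ge> 1 \<and> (0 < n \<longrightarrow> good e M (B n) (L n))"
proof (induction n)
  case 0 then show ?case by simp
next
  case (Suc n)
  have g: "good e M (B n + L n / 2^(w n)) (L n / 2^(w n))"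
    by (rule wit) (use Suc.IH in auto)
  have g2: "good e M (B n + L n / 2 ^ sel e M (sq e M n)) (L n / 2 ^ sel e M (sq e M n))"
    using sel_good[OF g] by blast
  have p: "0 < L n / 2 ^ sel e M (sq e M n)" using Suc.IH by simp
  have q: "1 \<le> B n + L n / 2 ^ sel e M (sq e M n)" using p Suc.IH by linarith
  show ?case unfolding B_Suc L_Suc using g2 p q by blast
qed

lemma L_pos: "L n > 0" using inv by blast
lemma B_ge1: "B n \<ge> 1" using inv by blast
lemma good_n: "0 < n \<Longrightarrow> good e M (B n) (L n)" using inv by blast

lemma sel_le: "sel e M (sq e M n) \<le> w n"
proof -
  have g: "good e M (B n + L n / 2^(w n)) (L n / 2^(w n))"
    by (rule wit) (use inv in auto)
  show ?thesis using sel_good[OF g] by blast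
qed

lemma B_Suc2: "B (Suc n) = B n + L (Suc n)" by (simp add: B_Suc L_Suc)

lemma L_dec: "L (Suc n) \<le> L n"
proof -
  have "L n * 1 \<le> L n * 2 ^ sel e M (sq e M n)" using L_pos[of n] by (intro mult_left_mono) auto
  then show ?thesis unfolding L_Suc by (simp add: pos_divide_le_eq)
qed

definition K :: real where "K = pw (2*M*C) + pw C"

lemma K_ge1: "1 \<le> K" unfolding K_def using pw_one[of "2*M*C"] pw_one[of C] by simp

lemma L_ratio: "L n \<le> K * L (Suc n)"
proof -
  have "(2::real)^ sel e M (sq e M n) \<le> 2^(w n)" using sel_le by (intro power_increasing) auto
  also have "\<dots> \<le> K"
  proof (cases "n = 0")
    case True
    then have "(2::real)^(w n) = pw (2*M*C)" unfolding w_def pw_def by simp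
    then show ?thesis unfolding K_def using pw_one[of C] by simp
  next
    case False
    then have "(2::real)^(w n) = pw C" unfolding w_def pw_def by simp
    then show ?thesis unfolding K_def using pw_one[of "2*M*C"] by simp
  qed
  finally have h: "(2::real)^ sel e M (sq e M n) \<le> K" .
  have "L n = 2^ sel e M (sq e M n) * L (Suc n)" by (simp add: L_Suc)
  also have "\<dots> \<le> K * L (Suc n)" using h L_pos[of "Suc n"] by (intro mult_right_mono) auto
  finally show ?thesis .
qed

lemma L_pow2: "\<exists>z::int. L n = 2 powi z"
proof (induction n)
  case 0 then show ?case by (intro exI[of _ 1]) simp
next
  case (Suc n)
  then obtain z where z: "L n = 2 powi z" by blast
  have "L (Suc n) = 2 powi z / 2 powi (int (sel e M (sq e M n)))"
    by (simp add: L_Suc z power_int_of_nat)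
  also have "\<dots> = 2 powi (z - int (sel e M (sq e M n)))" by (simp add: power_int_diff)
  finally show ?case by blast
qed

lemma B_mono: "B n < B (Suc n)" using L_pos[of "Suc n"] by (simp add: B_Suc2)

lemma B_lin: "(\<forall>j. l \<le> L (N + j)) \<Longrightarrow> B N + real m * l \<le> B (N + m)"
proof (induction m)
  case 0 then show ?case by simp
next
  case (Suc m)
  have "B (N + Suc m) = B (N + m) + L (Suc (N + m))" by (simp add: B_Suc2)
  moreover have "l \<le> L (N + Suc m)" using Suc.prems by blast
  moreover have "B N + real m * l \<le> B (N + m)" using Suc by blast
  ultimately show ?case by (simp add: algebra_simps)
qed

lemma L_le2: "L n \<le> 2"
proof -
  have "snd (sq e M n) \<le> snd (sq e M 0)"
    by (rule lift_Suc_antimono_le[of "\<lambda>n. snd (sq e M n)", OF L_dec]) simp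
  then show ?thesis by simp
qed

lemma B_unbounded: "\<exists>n. X < B n"
proof (rule ccontr)
  assume "\<not> (\<exists>n. X < B n)"
  then have bnd: "\<And>n. B n \<le> X" by (simp add: not_less)
  have arch: False if l: "0 < l" "\<forall>j. l \<le> L (N + j)" for N l
  proof -
    obtain m :: nat where m: "(X - B N) / l < real m" using reals_Archimedean2 by blast
    then have "X - B N < real m * l" using l by (simp add: pos_divide_less_eq)
    moreover have "B N + real m * l \<le> B (N + m)" by (rule B_lin[OF l(2)])
    ultimately show False using bnd[of "N+m"] by linarith
  qed
  have Mp: "0 < M" using M by simp
  obtain ls where ls: "ls > 0" "good e M (X + 2) ls" using good_exists[OF sm up dn Mp, of "X+2"] by blast
  show False
  proof (cases "\<forall>n. ls \<le> L n")
    case True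
    then have "\<forall>j. ls \<le> L (0 + j)" by simp
    then show False using arch[of ls 0] ls by blast
  next
    case False
    then obtain N where N: "L N < ls" by (auto simp: not_le)
    have const: "L (N + j) = L N" for j
    proof (induction j)
      case 0 then show ?case by simp
    next
      case (Suc j)
      have "good e M (B (N+j) + L (N+j) / 2^0) (L (N+j) / 2^0)"
      proof (rule good_mono[OF ls(2)])
        show "B (N + j) + L (N + j) / 2 ^ 0 \<le> X + 2" using bnd[of "N+j"] L_le2[of "N+j"] by simp
        show "L (N + j) / 2 ^ 0 \<le> ls" using Suc N by simp
        show "0 < M" using M by simp
      qed
      then have "sel e M (sq e M (N+j)) = 0" unfolding sel_def by (intro Least_eq_0) simp
      then show ?case using Suc by (simp add: L_Suc)
    qed
    have "\<forall>j. L N \<le> L (N + j)" using const by simp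
    then show False using arch[of "L N" N] L_pos[of N] by blast
  qed
qed

end


lemma adj_idx:
  fixes e :: "int \<Rightarrow> real"
  assumes sm: "strict_mono e" and adj: "adjacent {e j<..<e (j+1)} {e k<..<e (k+1)}"
  shows "k = j + 1 \<or> j = k + 1"
proof -
  have ne: "j \<noteq> k" using adj by (auto simp: adjacent_def)
  have lt: "e i < e (i+1)" for i using sm by (simp add: strict_mono_less)
  obtain x where "x \<in> closure {e j<..<e (j+1)}" "x \<in> closure {e k<..<e (k+1)}"
    using adj by (auto simp: adjacent_def)
  then have x: "e j \<le> x" "x \<le> e (j+1)" "e k \<le> x" "x \<le> e (k+1)" using lt[of j] lt[of k] by auto
  have "e k \<le> e (j+1)" using x by linarith
  then have "k \<le> j + 1" using sm by (simp add: strict_mono_less_eq)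
  moreover have "e j \<le> e (k+1)" using x by linarith
  then have "j \<le> k + 1" using sm by (simp add: strict_mono_less_eq)
  ultimately show ?thesis using ne by linarith
qed

lemma int_cases2: "(\<exists>m::nat. k = int m + 1) \<or> (\<exists>m::nat. k = - int m)"
proof (cases "0 < k")
  case True then have "k = int (nat (k-1)) + 1" by simp
  then show ?thesis by blast
next
  case False then have "k = - int (nat (-k))" by simp
  then show ?thesis by blast
qed

context cons
begin

definition ep :: "int \<Rightarrow> real" where
  "ep k = (if 0 < k then B (nat (k-1)) else - B (nat (-k)))"

lemma ep_pos: "ep (int m + 1) = B m" unfolding ep_def by simp
lemma ep_neg: "ep (- int m) = - B m" unfolding ep_def by simp

lemma ep_neg1: "ep (-1 - int m) = - B (Suc m)"
proof -
  have h: "nat (int m + 1) = Suc m" by (simp add: nat_eq_iff)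
  show ?thesis unfolding ep_def using h by simp
qed
lemma ep_neg2: "ep (- int m - 1) = - B (Suc m)"
proof -
  have e: "- int m - 1 = -1 - int m" by simp
  show ?thesis unfolding e by (rule ep_neg1)
qed
lemma ep_neg3: "ep (- (int m + 1)) = - B (Suc m)"
proof -
  have e: "- (int m + 1) = -1 - int m" by simp
  show ?thesis unfolding e by (rule ep_neg1)
qed

lemma B0: "B 0 = 1" by simp
lemma L0: "L 0 = 2" by simp

lemma ep_diff: "ep (k+1) - ep k = L (nat \<bar>k\<bar>)"
proof -
  consider (p) m where "k = int m + 1" | (n) m where "k = - int m" using int_cases2 by blast
  then show ?thesis
  proof cases
    case p
    have "ep (k+1) = B (Suc m)" using ep_pos[of "Suc m"] p by (simp add: add.commute)
    moreover have "ep k = B m" using ep_pos p by simp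
    moreover have "nat \<bar>k\<bar> = Suc m" using p by simp
    ultimately show ?thesis using B_Suc2[of m] by simp
  next
    case n
    show ?thesis
    proof (cases m)
      case 0
      then have "k = 0" using n by simp
      then show ?thesis using ep_pos[of 0] ep_neg[of 0] by simp
    next
      case (Suc m')
      have "ep (k+1) = - B m'" using ep_neg[of m'] n Suc by simp
      moreover have "ep k = - B (Suc m')" using ep_neg1 n Suc by simp
      moreover have "nat \<bar>k\<bar> = Suc m'" using n Suc by simp
      ultimately show ?thesis using B_Suc2[of m'] by simp
    qed
  qed
qed

lemma ep_lt: "ep k < ep (k+1)" using ep_diff[of k] L_pos[of "nat \<bar>k\<bar>"] by linarith

lemma ep_sm: "strict_mono ep" by (rule strict_mono_int_suc) (rule ep_lt)

lemma ep_up: "\<exists>k. X < ep k"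
proof -
  obtain n where "X < B n" using B_unbounded by blast
  then show ?thesis using ep_pos[of n] by metis
qed

lemma ep_dn: "\<exists>k. ep k < X"
proof -
  obtain n where "- X < B n" using B_unbounded by blast
  then have "ep (- int n) < X" using ep_neg[of n] by simp
  then show ?thesis by blast
qed

lemma ep_sym: "ep (- j) = - ep (j+1)"
proof -
  consider (p) m where "j = int m + 1" | (n) m where "j = - int m" using int_cases2 by blast
  then show ?thesis
  proof cases
    case p
    have "ep (- j) = - B (Suc m)" using ep_neg3[of m] p by simp
    moreover have "ep (j+1) = B (Suc m)" using ep_pos[of "Suc m"] p by (simp add: add.commute)
    ultimately show ?thesis by simp
  next
    case n
    show ?thesis
    proof (cases m)
      case 0
      then show ?thesis using n ep_pos[of 0] ep_neg[of 0] by simp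
    next
      case (Suc m')
      have "ep (- j) = B m'" using ep_pos[of m'] n Suc by (simp add: add.commute)
      moreover have "ep (j+1) = - B m'" using ep_neg[of m'] n Suc by simp
      ultimately show ?thesis by simp
    qed
  qed
qed

lemma ep_bound:
  assumes "j \<noteq> 0" "ep j < x" "x < ep (j+1)"
  shows "\<bar>x\<bar> < B (nat \<bar>j\<bar>) \<and> 0 < nat \<bar>j\<bar>"
proof -
  consider (p) m where "j = int m + 1" | (n) m where "j = - int m" using int_cases2 by blast
  then show ?thesis
  proof cases
    case p
    have "ep j = B m" using ep_pos p by simp
    moreover have "ep (j+1) = B (Suc m)" using ep_pos[of "Suc m"] p by (simp add: add.commute)
    moreover have "nat \<bar>j\<bar> = Suc m" using p by simp
    ultimately show ?thesis using assms B_ge1[of m] by simp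
  next
    case n
    then obtain m' where Suc: "m = Suc m'" using assms(1) by (cases m) auto
    have "ep j = - B (Suc m')" using ep_neg1 n Suc by simp
    moreover have "ep (j+1) = - B m'" using ep_neg[of m'] n Suc by simp
    moreover have "nat \<bar>j\<bar> = Suc m'" using n Suc by simp
    ultimately show ?thesis using assms B_ge1[of m'] by simp
  qed
qed

lemma L_ratio2: "b = Suc a \<or> a = Suc b \<Longrightarrow> L a / L b \<le> K"
proof -
  assume "b = Suc a \<or> a = Suc b"
  then show ?thesis
  proof
    assume b: "b = Suc a"
    show ?thesis using L_ratio[of a] L_pos[of b] b by (simp add: pos_divide_le_eq)
  next
    assume a: "a = Suc b"
    have "L a / L b \<le> 1" using L_dec[of b] L_pos[of b] a by simp
    then show ?thesis using K_ge1 by linarith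
  qed
qed

end



theorem mainTheorem17:
  shows "\<exists>K :: real \<Rightarrow> real \<Rightarrow> real.
    \<forall>(C::real) (M::real) (I :: int \<Rightarrow> real set).
      Z_partition I \<and> bounded_geometry (range I) C \<and>
      I 0 = {-1<..<1} \<and> 1 < M
      \<longrightarrow>
      (\<exists>I' :: int \<Rightarrow> real set.
         Z_partition I' \<and>
         I' 0 = I 0 \<and>
         (\<forall>j. I' (-j) = uminus ` I' j) \<and>
         (\<forall>j k. \<bar>j\<bar> \<le> \<bar>k\<bar> \<longrightarrow> ilen (I' k) \<le> ilen (I' j)) \<and>
         (\<forall>j. \<exists>n::int. ilen (I' j) = 2 powi n) \<and>
         (\<forall>j k. I' j \<noteq> I 0 \<and> I' j \<inter> I k \<noteq> {} \<longrightarrow> ilen (I' j) < ilen (I k) / M) \<and>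
         bounded_geometry (range I') (K M C))"
proof (intro exI[of _ "\<lambda>M C. pw (2*M*C) + pw C"] allI impI)
  fix C M :: real and I :: "int \<Rightarrow> real set"
  assume hyp: "Z_partition I \<and> bounded_geometry (range I) C \<and> I 0 = {-1<..<1} \<and> 1 < M"
  then have Z: "Z_partition I" and BG: "bounded_geometry (range I) C" and I0: "I 0 = {-1<..<1}"
    and M: "1 < M" by auto
  have bd: "\<forall>J\<in>range I. bounded J" using BG by (simp add: bounded_geometry_def)
  obtain e where sm: "strict_mono e" and form: "\<And>k. I k = {e k<..<e (k+1)}"
    and up: "\<And>B. \<exists>k. B < e k" and dn: "\<And>B. \<exists>k. e k < B"
    using decompose_Z[OF Z bd] by blast
  have lt: "e k < e (k+1)" for k using sm by (simp add: strict_mono_less)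
  have len: "ilen (I k) = e (k+1) - e k" for k
    unfolding ilen_def form using lt[of k] by simp
  have "{e 0<..<e (0+1)} = {-1<..<1}" using I0 form[of 0] by simp
  then have e01: "e 0 = -1 \<and> e 1 = 1" using lt[of 0] by (simp add: greaterThanLessThan_eq_iff)
  have adjI: "adjacent (I k) (I (k+1))" for k using Z by (simp add: Z_partition_def)
  have adjI': "adjacent (I (k+1)) (I k)" for k using adjI[of k] by (auto simp: adjacent_def)
  have rat: "ilen J / ilen J' \<le> C" if "J \<in> range I" "J' \<in> range I" "adjacent J J'" for J J'
    using BG that unfolding bounded_geometry_def by blast
  have R1: "e (k+1) - e k \<le> C * (e (k+1+1) - e (k+1))" for k
  proof -
    have "ilen (I k) / ilen (I (k+1)) \<le> C" using rat adjI[of k] by blast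
    then show ?thesis unfolding len using lt[of "k+1"] by (simp add: pos_divide_le_eq mult.commute)
  qed
  have R2: "e (k+1+1) - e (k+1) \<le> C * (e (k+1) - e k)" for k
  proof -
    have "ilen (I (k+1)) / ilen (I k) \<le> C" using rat adjI'[of k] by blast
    then show ?thesis unfolding len using lt[of "k"] by (simp add: pos_divide_le_eq mult.commute)
  qed
  have C1: "1 \<le> C"
  proof (rule ccontr)
    assume "\<not> 1 \<le> C" then have c: "C < 1" by simp
    define x where "x = e (0+1) - e 0"
    define y where "y = e (0+1+1) - e (0+1)"
    have a: "x \<le> C * y" unfolding x_def y_def by (rule R1)
    have b: "y \<le> C * x" unfolding x_def y_def by (rule R2)
    have p0: "0 < x" unfolding x_def using lt[of 0] by simp
    have p1: "0 < y" unfolding y_def using lt[of "0+1"] by simp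
    have "C * y < 1 * y" using c p1 by (intro mult_strict_right_mono) auto
    moreover have "C * x < 1 * x" using c p0 by (intro mult_strict_right_mono) auto
    ultimately show False using a b by linarith
  qed
  interpret cons e M C
    using sm up dn R1 R2 M C1 e01 by unfold_locales auto
  define I' where "I' k = {ep k<..<ep (k+1)}" for k
  have lenI': "ilen (I' k) = L (nat \<bar>k\<bar>)" for k
    unfolding ilen_def I'_def using ep_lt[of k] ep_diff[of k] by simp
  have Kd: "pw (2*M*C) + pw C = K" by (simp add: K_def)
  show "\<exists>I'. Z_partition I' \<and> I' 0 = I 0 \<and> (\<forall>j. I' (- j) = uminus ` I' j) \<and>
          (\<forall>j k. \<bar>j\<bar> \<le> \<bar>k\<bar> \<longrightarrow> ilen (I' k) \<le> ilen (I' j)) \<and>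
          (\<forall>j. \<exists>n. ilen (I' j) = 2 powi n) \<and>
          (\<forall>j k. I' j \<noteq> I 0 \<and> I' j \<inter> I k \<noteq> {} \<longrightarrow> ilen (I' j) < ilen (I k) / M) \<and>
          bounded_geometry (range I') ((\<lambda>M C. pw (2*M*C) + pw C) M C)"
  proof (intro exI[of _ I'] conjI allI impI)
    show "Z_partition I'" unfolding I'_def by (rule compose_Z[OF ep_sm ep_up ep_dn])
    have "ep 0 = -1" using ep_neg[of 0] by simp
    moreover have "ep 1 = 1" using ep_pos[of 0] by simp
    ultimately show "I' 0 = I 0" unfolding I'_def I0 by simp
  next
    fix j
    have a: "ep (- j) = - ep (j+1)" by (rule ep_sym)
    have b: "ep (- j + 1) = - ep j" using ep_sym[of "j - 1"] by simp
    show "I' (- j) = uminus ` I' j" unfolding I'_def using a b by simp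
  next
    fix j k :: int assume "\<bar>j\<bar> \<le> \<bar>k\<bar>"
    then have "nat \<bar>j\<bar> \<le> nat \<bar>k\<bar>" by simp
    then have "snd (sq e M (nat \<bar>k\<bar>)) \<le> snd (sq e M (nat \<bar>j\<bar>))"
      by (rule lift_Suc_antimono_le[of "\<lambda>n. snd (sq e M n)", OF L_dec])
    then show "ilen (I' k) \<le> ilen (I' j)" unfolding lenI' .
  next
    fix j
    show "\<exists>n. ilen (I' j) = 2 powi n" unfolding lenI' by (rule L_pow2)
  next
    fix j k assume h: "I' j \<noteq> I 0 \<and> I' j \<inter> I k \<noteq> {}"
    have "j \<noteq> 0"
    proof
      assume "j = 0"
      moreover have "ep 0 = -1" using ep_neg[of 0] by simp
      moreover have "ep 1 = 1" using ep_pos[of 0] by simp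
      ultimately show False using h unfolding I'_def I0 by simp
    qed
    obtain x where x: "x \<in> I' j" "x \<in> I k" using h by blast
    have xj: "ep j < x" "x < ep (j+1)" using x(1) unfolding I'_def by auto
    have xk: "e k < x" "x < e (k+1)" using x(2) unfolding form by auto
    have bnd: "\<bar>x\<bar> < B (nat \<bar>j\<bar>) \<and> 0 < nat \<bar>j\<bar>" by (rule ep_bound[OF \<open>j \<noteq> 0\<close> xj])
    have g: "good e M (B (nat \<bar>j\<bar>)) (L (nat \<bar>j\<bar>))" using good_n bnd by blast
    have "e k < B (nat \<bar>j\<bar>) \<and> - B (nat \<bar>j\<bar>) < e (k+1)" using bnd xk by linarith
    then have "M * L (nat \<bar>j\<bar>) < e (k+1) - e k" using g unfolding good_def by blast
    then show "ilen (I' j) < ilen (I k) / M" unfolding lenI' len using M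
      by (simp add: pos_less_divide_eq mult.commute)
  next
    show "bounded_geometry (range I') ((\<lambda>M C. pw (2*M*C) + pw C) M C)"
      unfolding bounded_geometry_def Kd
    proof (intro conjI ballI impI)
      fix J assume "J \<in> range I'" then show "bounded J" unfolding I'_def by auto
    next
      fix J J' assume "J \<in> range I'" "J' \<in> range I'" and adj: "adjacent J J'"
      then obtain j k where jk: "J = I' j" "J' = I' k" by blast
      have "k = j + 1 \<or> j = k + 1" by (rule adj_idx[OF ep_sm]) (use adj jk in \<open>simp add: I'_def\<close>)
      then have "nat \<bar>k\<bar> = Suc (nat \<bar>j\<bar>) \<or> nat \<bar>j\<bar> = Suc (nat \<bar>k\<bar>)" by auto
      then have "L (nat \<bar>j\<bar>) / L (nat \<bar>k\<bar>) \<le> K" by (rule L_ratio2)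
      then show "ilen J / ilen J' \<le> K" unfolding jk lenI' .
    qed
  qed
qed


end
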